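(* Let $X$ be a random variable with values in $[-1,1]$ whose distribution has a density $f$ with respect to Lebesgue measure satisfying $f(x)=f(-x)$ for all $x\in[-1,1]$ and $f$ strictly increasing on $[0,1]$. Let $X_1,X_2,X_3$ be independent copies of $X$ and $F(a,b,c)=\mathbb E\bigl(\log(a^2(1-X_1)+b^2(1-X_2)+c^2(1-X_3))\bigr)$. Then for any nonzero $\varkappa\in\mathbb R$ and any real $a,b,c$ with $a+b+c=0$ and $a^2+b^2+c^2=2\varkappa^2$, $$F(a,b,c)\ge F(0,\varkappa,-\varkappa).$$ Moreover the inequality is strict whenever $a,b,c\ne0$ and $F(0,\varkappa,-\varkappa)>-\infty$. *)

theory Defs
  imports "HOL-Probability.Probability"
begin

text \<open>It is well defined whenever at
  least one of the two parts is finite (in the application the positive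
  part is bounded, so the value lies in [-infinity, infinity)).\<close>
definition ext_expectation :: "'a measure \<Rightarrow> ('a \<Rightarrow> real) \<Rightarrow> ereal" where
  "ext_expectation M g =
     enn2ereal (\<integral>\<^sup>+ \<omega>. ennreal (g \<omega>) \<partial>M) - enn2ereal (\<integral>\<^sup>+ \<omega>. ennreal (- g \<omega>) \<partial>M)"

definition Flog :: "'a measure \<Rightarrow> (nat \<Rightarrow> 'a \<Rightarrow> real) \<Rightarrow> real \<Rightarrow> real \<Rightarrow> real \<Rightarrow> ereal" where
  "Flog M X a b c = ext_expectation M
     (\<lambda>\<omega>. ln (a\<^sup>2 * (1 - X 0 \<omega>) + b\<^sup>2 * (1 - X 1 \<omega>) + c\<^sup>2 * (1 - X 2 \<omega>)))"

end

theory Submission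
  imports Defs "HOL-Probability.Probability"
begin

lemma exp_taylor2_bound:
  fixes z :: real
  assumes "\<bar>z\<bar> \<le> 1"
  shows "\<bar>exp z - 1 - z\<bar> \<le> 2 * z^2"
proof -
  obtain t where t: "\<bar>t\<bar> \<le> \<bar>z\<bar>" "exp z = (\<Sum>m<2. (z ^ m) / fact m) + (exp t / fact 2) * z ^ 2"
    using Maclaurin_exp_le[of z 2] by blast
  have e: "exp z - 1 - z = exp t / 2 * z^2" using t(2) by (simp add: numeral_2_eq_2)
  have "exp t \<le> exp 1" using t(1) assms by simp
  also have "exp (1::real) \<le> 4" using exp_le by simp
  finally have "exp t / 2 \<le> 2" by simp
  then have "exp t / 2 * z^2 \<le> 2 * z^2" by (rule mult_right_mono) simp
  moreover have "0 \<le> exp t / 2 * z^2" by simp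
  ultimately show ?thesis using e by (simp only: abs_of_nonneg)
qed

lemma exp_ux_le: "\<bar>x::real\<bar> \<le> 1 \<Longrightarrow> exp (u*x) \<le> exp \<bar>u\<bar>"
proof -
  assume x: "\<bar>x\<bar> \<le> 1"
  have "u * x \<le> \<bar>u * x\<bar>" by (rule abs_ge_self)
  also have "\<dots> = \<bar>u\<bar> * \<bar>x\<bar>" by (simp add: abs_mult)
  also have "\<dots> \<le> \<bar>u\<bar>" using x by (simp add: mult_left_le)
  finally show ?thesis by simp
qed

lemma pow_le1: "\<bar>x::real\<bar> \<le> 1 \<Longrightarrow> \<bar>x^k\<bar> \<le> 1"
  by (simp add: power_abs power_le_one)

lemma taylor_quot_bound:
  fixes h x :: real
  assumes h0: "h \<noteq> 0" and h1: "\<bar>h\<bar> \<le> 1" and x: "\<bar>x\<bar> \<le> 1"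
  shows "\<bar>x^k * exp (u*x) * ((exp (h*x) - 1 - h*x) / h)\<bar> \<le> 2 * exp \<bar>u\<bar> * \<bar>h\<bar>"
proof -
  have a1: "\<bar>x^k\<bar> \<le> 1" using x by (rule pow_le1)
  have a2: "exp (u*x) \<le> exp \<bar>u\<bar>" using x by (rule exp_ux_le)
  have hx: "\<bar>h*x\<bar> \<le> 1" using x h1 by (simp add: abs_mult mult_le_one)
  have "\<bar>exp (h*x) - 1 - h*x\<bar> \<le> 2 * (h*x)^2" by (rule exp_taylor2_bound[OF hx])
  also have "(h*x)^2 = h^2 * x^2" by (simp add: power_mult_distrib)
  also have "x^2 \<le> 1" using x by (simp add: abs_square_le_1)
  then have "2 * (h^2 * x^2) \<le> 2 * h^2" by (simp add: mult_left_le)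
  finally have "\<bar>exp (h*x) - 1 - h*x\<bar> \<le> 2 * h^2" by simp
  then have a3: "\<bar>(exp (h*x) - 1 - h*x) / h\<bar> \<le> 2 * \<bar>h\<bar>"
    using h0 by (simp add: abs_divide divide_le_eq power2_eq_square abs_mult)
  have "\<bar>x^k * exp (u*x) * ((exp (h*x) - 1 - h*x) / h)\<bar> \<le> 1 * exp \<bar>u\<bar> * (2 * \<bar>h\<bar>)"
    unfolding abs_mult using a1 a2 a3 by (intro mult_mono) auto
  then show ?thesis by simp
qed

definition Gk :: "(real \<Rightarrow> real) \<Rightarrow> nat \<Rightarrow> real \<Rightarrow> real" where
  "Gk w k u = (\<integral>x. w x * x^k * exp (u * x) \<partial>lborel)"

locale wdens =
  fixes w :: "real \<Rightarrow> real"
  assumes wint: "integrable lborel w" and wnn: "\<And>x. 0 \<le> w x"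
    and wsupp: "\<And>x. x \<notin> {-1..1} \<Longrightarrow> w x = 0"
begin

lemma wmeas[measurable]: "w \<in> borel_measurable borel"
  using borel_measurable_integrable[OF wint] by simp

lemma int_bounded:
  assumes [measurable]: "g \<in> borel_measurable borel" and bnd: "\<And>x. x \<in> {-1..1} \<Longrightarrow> \<bar>g x\<bar> \<le> B"
  shows "integrable lborel (\<lambda>x. w x * g x)"
proof -
  have "integrable lborel (\<lambda>x. B * w x)" using wint by simp
  then show ?thesis
  proof (rule Bochner_Integration.integrable_bound)
    show "AE x in lborel. norm (w x * g x) \<le> norm (B * w x)"
    proof (rule AE_I2)
      fix x show "norm (w x * g x) \<le> norm (B * w x)"
      proof (cases "x \<in> {-1..1}")
        case True
        then have "\<bar>g x\<bar> \<le> B" by (rule bnd)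
        then have "w x * \<bar>g x\<bar> \<le> w x * B" using wnn[of x] by (rule mult_left_mono)
        also have "w x * B \<le> w x * \<bar>B\<bar>" using wnn[of x] by (rule mult_left_mono[OF abs_ge_self])
        finally show ?thesis using wnn[of x] by (simp add: abs_mult mult.commute)
      qed (simp add: wsupp)
    qed
  qed simp
qed

lemma int_Gk: "integrable lborel (\<lambda>x. w x * x^k * exp (u * x))"
proof -
  have "integrable lborel (\<lambda>x. w x * (x^k * exp (u * x)))"
  proof (rule int_bounded)
    fix x :: real assume x: "x \<in> {-1..1}"
    then have x': "\<bar>x\<bar> \<le> 1" by auto
    have "\<bar>x ^ k * exp (u * x)\<bar> \<le> 1 * exp \<bar>u\<bar>"
      unfolding abs_mult using pow_le1[OF x'] exp_ux_le[OF x'] by (intro mult_mono) auto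
    then show "\<bar>x ^ k * exp (u * x)\<bar> \<le> exp \<bar>u\<bar>" by simp
  qed simp
  then show ?thesis by (simp add: mult.assoc)
qed

lemma Gk_deriv: "(Gk w k has_real_derivative Gk w (Suc k) u) (at u)"
proof -
  define C where "C = 2 * exp \<bar>u\<bar> * (\<integral>x. w x \<partial>lborel)"
  have bound: "\<bar>(Gk w k y - Gk w k u) / (y - u) - Gk w (Suc k) u\<bar> \<le> C * \<bar>y - u\<bar>"
    if y: "y \<noteq> u" "\<bar>y - u\<bar> \<le> 1" for y
  proof -
    define h where "h = y - u"
    have h0: "h \<noteq> 0" and h1: "\<bar>h\<bar> \<le> 1" using y by (auto simp: h_def)
    have i1: "integrable lborel (\<lambda>x. w x * x^k * exp (y * x))" by (rule int_Gk)
    have i2: "integrable lborel (\<lambda>x. w x * x^k * exp (u * x))" by (rule int_Gk)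
    have i3: "integrable lborel (\<lambda>x. w x * x^(Suc k) * exp (u * x))" by (rule int_Gk)
    have eq: "(Gk w k y - Gk w k u) / (y - u) - Gk w (Suc k) u =
      (\<integral>x. w x * (x^k * exp (u*x) * ((exp (h*x) - 1 - h*x) / h)) \<partial>lborel)"
    proof -
      have "(Gk w k y - Gk w k u) / (y - u) - Gk w (Suc k) u =
        ((\<integral>x. w x * x^k * exp (y * x) \<partial>lborel) - (\<integral>x. w x * x^k * exp (u * x) \<partial>lborel)) / h
         - (\<integral>x. w x * x^(Suc k) * exp (u * x) \<partial>lborel)"
        by (simp add: Gk_def h_def)
      also have "(\<integral>x. w x * x^k * exp (y * x) \<partial>lborel) - (\<integral>x. w x * x^k * exp (u * x) \<partial>lborel)
          = (\<integral>x. w x * x^k * exp (y * x) - w x * x^k * exp (u * x) \<partial>lborel)"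
        using i1 i2 by (rule Bochner_Integration.integral_diff[symmetric])
      also have "(\<integral>x. w x * x^k * exp (y * x) - w x * x^k * exp (u * x) \<partial>lborel) / h
          = (\<integral>x. (w x * x^k * exp (y * x) - w x * x^k * exp (u * x)) / h \<partial>lborel)"
        by simp
      also have "(\<integral>x. (w x * x^k * exp (y * x) - w x * x^k * exp (u * x)) / h \<partial>lborel)
           - (\<integral>x. w x * x^(Suc k) * exp (u * x) \<partial>lborel)
          = (\<integral>x. (w x * x^k * exp (y * x) - w x * x^k * exp (u * x)) / h - w x * x^(Suc k) * exp (u * x) \<partial>lborel)"
      proof (rule Bochner_Integration.integral_diff[symmetric])
        show "integrable lborel (\<lambda>x. (w x * x^k * exp (y * x) - w x * x^k * exp (u * x)) / h)"
          using i1 i2 by (intro integrable_divide Bochner_Integration.integrable_diff)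
      qed (rule i3)
      also have "\<dots> = (\<integral>x. w x * (x^k * exp (u*x) * ((exp (h*x) - 1 - h*x) / h)) \<partial>lborel)"
      proof (rule Bochner_Integration.integral_cong[OF refl])
        fix x
        have "exp (y*x) = exp (u*x) * exp (h*x)" by (simp add: h_def exp_add[symmetric] algebra_simps)
        then show "(w x * x^k * exp (y * x) - w x * x^k * exp (u * x)) / h - w x * x^(Suc k) * exp (u * x)
          = w x * (x^k * exp (u*x) * ((exp (h*x) - 1 - h*x) / h))"
          using h0 by (simp add: field_simps)
      qed
      finally show ?thesis .
    qed
    have pw: "\<bar>w x * (x^k * exp (u*x) * ((exp (h*x) - 1 - h*x) / h))\<bar> \<le> w x * (2 * exp \<bar>u\<bar> * \<bar>h\<bar>)" for x
    proof (cases "x \<in> {-1..1}")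
      case x: True
      then have x': "\<bar>x\<bar> \<le> 1" by auto
      have "w x * \<bar>x^k * exp (u*x) * ((exp (h*x) - 1 - h*x) / h)\<bar> \<le> w x * (2 * exp \<bar>u\<bar> * \<bar>h\<bar>)"
        using taylor_quot_bound[OF h0 h1 x'] wnn[of x] by (rule mult_left_mono)
      then show ?thesis using wnn[of x] by (simp add: abs_mult)
    qed (simp add: wsupp)
    have "\<bar>\<integral>x. w x * (x^k * exp (u*x) * ((exp (h*x) - 1 - h*x) / h)) \<partial>lborel\<bar>
        \<le> (\<integral>x. \<bar>w x * (x^k * exp (u*x) * ((exp (h*x) - 1 - h*x) / h))\<bar> \<partial>lborel)"
      by (rule integral_abs_bound)
    also have "\<dots> \<le> (\<integral>x. w x * (2 * exp \<bar>u\<bar> * \<bar>h\<bar>) \<partial>lborel)"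
    proof (rule integral_mono)
      show "integrable lborel (\<lambda>x. w x * (2 * exp \<bar>u\<bar> * \<bar>h\<bar>))" using wint by simp
      have "integrable lborel (\<lambda>x. w x * (x^k * exp (u*x) * ((exp (h*x) - 1 - h*x) / h)))"
      proof (rule int_bounded)
        fix x :: real assume x: "x \<in> {-1..1}"
        then have x': "\<bar>x\<bar> \<le> 1" by auto
        show "\<bar>x^k * exp (u*x) * ((exp (h*x) - 1 - h*x) / h)\<bar> \<le> 2 * exp \<bar>u\<bar> * \<bar>h\<bar>"
          by (rule taylor_quot_bound[OF h0 h1 x'])
      qed simp
      then show "integrable lborel (\<lambda>x. \<bar>w x * (x^k * exp (u*x) * ((exp (h*x) - 1 - h*x) / h))\<bar>)"
        by (rule integrable_abs)
    qed (rule pw)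
    also have "\<dots> = C * \<bar>y - u\<bar>" by (simp add: C_def h_def)
    finally show ?thesis using eq by simp
  qed
  show ?thesis
    unfolding has_field_derivative_iff
  proof (rule tendstoI)
    fix e :: real assume e: "0 < e"
    define d where "d = min 1 (e / (C + 1))"
    have C0: "0 \<le> C" unfolding C_def using wnn by (simp add: integral_nonneg)
    have d0: "0 < d" using e C0 by (simp add: d_def)
    show "\<forall>\<^sub>F y in at u. dist ((Gk w k y - Gk w k u) / (y - u)) (Gk w (Suc k) u) < e"
      unfolding eventually_at
    proof (intro exI[of _ d] conjI ballI impI)
      show "0 < d" by (rule d0)
      fix y assume "y \<noteq> u \<and> dist y u < d"
      then have y: "y \<noteq> u" "\<bar>y - u\<bar> < d" by (auto simp: dist_real_def)
      have "\<bar>y - u\<bar> \<le> 1" using y by (simp add: d_def)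
      then have "\<bar>(Gk w k y - Gk w k u) / (y - u) - Gk w (Suc k) u\<bar> \<le> C * \<bar>y - u\<bar>" using bound y by blast
      also have "\<dots> \<le> C * d" using y C0 by (simp add: mult_left_mono)
      also have "\<dots> < e"
      proof -
        have "C * d \<le> C * (e / (C+1))" unfolding d_def using C0 by (rule mult_left_mono[OF min.cobounded2])
        also have "\<dots> < e" using C0 e by (simp add: field_simps)
        finally show ?thesis .
      qed
      finally show "dist ((Gk w k y - Gk w k u) / (y - u)) (Gk w (Suc k) u) < e" by (simp add: dist_real_def)
    qed
  qed
qed

end

lemma pos_integral_lborel:
  fixes f :: "real \<Rightarrow> real"
  assumes int: "integrable lborel f" and nn: "\<And>x. 0 \<le> f x"
    and pos: "\<And>x. a < x \<Longrightarrow> x < b \<Longrightarrow> 0 < f x" and ab: "a < b"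
  shows "0 < (\<integral>x. f x \<partial>lborel)"
proof -
  have fm[measurable]: "f \<in> borel_measurable borel" using borel_measurable_integrable[OF int] by simp
  have ge: "0 \<le> (\<integral>x. f x \<partial>lborel)" using nn by (simp add: integral_nonneg)
  have "(\<integral>x. f x \<partial>lborel) \<noteq> 0"
  proof
    assume "(\<integral>x. f x \<partial>lborel) = 0"
    then have "AE x in lborel. f x = 0" using integral_nonneg_eq_0_iff_AE[OF int] nn by simp
    then have "AE x in lborel. x \<notin> {a<..<b}" by eventually_elim (use pos in force)
    then have "{a<..<b} \<in> null_sets lborel"
      by (subst AE_iff_null_sets) auto
    then have "emeasure lborel {a<..<b} = 0" by auto
    then show False using ab by simp
  qed
  then show ?thesis using ge by simp
qed

locale wsym = wdens +
  assumes wsym: "\<And>x. w (-x) = w x"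
    and wmono: "\<And>x y. 0 \<le> x \<Longrightarrow> x < y \<Longrightarrow> y \<le> 1 \<Longrightarrow> w x < w y"
    and wone: "(\<integral>x. w x \<partial>lborel) = 1"
begin

lemma w_abs: "w \<bar>x\<bar> = w x"
  by (cases "x \<ge> 0") (auto simp: wsym)

lemma w_le: "\<bar>y\<bar> \<le> \<bar>x\<bar> \<Longrightarrow> \<bar>x\<bar> \<le> 1 \<Longrightarrow> w y \<le> w x"
  using wmono[of "\<bar>y\<bar>" "\<bar>x\<bar>"] w_abs[of x] w_abs[of y]
  by (cases "\<bar>y\<bar> = \<bar>x\<bar>") auto

lemma w_pos: "0 < \<bar>x\<bar> \<Longrightarrow> \<bar>x\<bar> \<le> 1 \<Longrightarrow> 0 < w x"
  using wmono[of 0 "\<bar>x\<bar>"] wnn[of 0] w_abs[of x] by auto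

lemma G0_pos: "0 < Gk w 0 u"
proof -
  have "(\<integral>x. w x * exp (- \<bar>u\<bar>) \<partial>lborel) \<le> (\<integral>x. w x * exp (u * x) \<partial>lborel)"
  proof (rule integral_mono)
    show "integrable lborel (\<lambda>x. w x * exp (- \<bar>u\<bar>))" using wint by simp
    show "integrable lborel (\<lambda>x. w x * exp (u * x))" using int_Gk[of 0 u] by simp
    fix x
    show "w x * exp (- \<bar>u\<bar>) \<le> w x * exp (u * x)"
    proof (cases "x \<in> {-1..1}")
      case True
      then have "\<bar>-x\<bar> \<le> 1" by auto
      from exp_ux_le[OF this, of u] have "exp (- (u*x)) \<le> exp \<bar>u\<bar>" by simp
      then have "- \<bar>u\<bar> \<le> u * x" by simp
      then show ?thesis using wnn[of x] by (intro mult_left_mono) auto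
    qed (simp add: wsupp)
  qed
  moreover have "(\<integral>x. w x * exp (- \<bar>u\<bar>) \<partial>lborel) = exp (- \<bar>u\<bar>)" using wone by simp
  ultimately show ?thesis by (simp add: Gk_def) (smt (verit) exp_gt_zero)
qed

lemma G1_nonneg: assumes u: "0 \<le> u" shows "0 \<le> Gk w 1 u"
proof -
  have "Gk w 1 u = (\<integral>x. w x * x * exp (u * x) \<partial>lborel)" by (simp add: Gk_def)
  also have "\<dots> = (\<integral>x. w (0 + -1 * x) * (0 + -1 * x) * exp (u * (0 + -1 * x)) \<partial>lborel)"
    using lborel_integral_real_affine[of "-1" "\<lambda>x. w x * x * exp (u * x)" 0] by simp
  also have "\<dots> = (\<integral>x. - (w x * x * exp (- u * x)) \<partial>lborel)" by (simp add: wsym)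
  finally have r: "Gk w 1 u = - (\<integral>x. w x * x * exp (- u * x) \<partial>lborel)" by simp
  have "2 * Gk w 1 u = Gk w 1 u + Gk w 1 u" by simp
  also have "\<dots> = (\<integral>x. w x * x * exp (u * x) \<partial>lborel) - (\<integral>x. w x * x * exp (- u * x) \<partial>lborel)"
    using r by (simp add: Gk_def)
  also have "\<dots> = (\<integral>x. w x * (x * (exp (u * x) - exp (- u * x))) \<partial>lborel)"
    using int_Gk[of 1 u] int_Gk[of 1 "-u"]
    by (subst Bochner_Integration.integral_diff[symmetric]) (auto simp: algebra_simps)
  also have "\<dots> \<ge> 0"
  proof (rule Bochner_Integration.integral_nonneg)
    fix x
    have "0 \<le> x * (exp (u * x) - exp (- u * x))"
    proof (cases "x \<ge> 0")
      case True
      then have "- u * x \<le> u * x" using u by (simp add: mult_nonneg_nonneg)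
      then show ?thesis using True by simp
    next
      case False
      then have "u * x \<le> - u * x" using u by (simp add: mult_nonneg_nonpos)
      then show ?thesis using False by (simp add: mult_nonpos_nonpos)
    qed
    then show "0 \<le> w x * (x * (exp (u * x) - exp (- u * x)))" using wnn[of x] by simp
  qed
  finally show ?thesis by simp
qed

lemma G1_lt_G0: "Gk w 1 u < Gk w 0 u"
proof -
  have "Gk w 0 u - Gk w 1 u = (\<integral>x. w x * ((1 - x) * exp (u * x)) \<partial>lborel)"
    using int_Gk[of 0 u] int_Gk[of 1 u] unfolding Gk_def
    by (subst Bochner_Integration.integral_diff[symmetric]) (auto simp: algebra_simps)
  also have "\<dots> > 0"
  proof (rule pos_integral_lborel)
    show "integrable lborel (\<lambda>x. w x * ((1 - x) * exp (u * x)))"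
    proof (rule int_bounded)
      fix x :: real assume "x \<in> {-1..1}"
      then have x: "\<bar>x\<bar> \<le> 1" and "\<bar>1 - x\<bar> \<le> 2" by auto
      then have "\<bar>(1 - x) * exp (u * x)\<bar> \<le> 2 * exp \<bar>u\<bar>"
        unfolding abs_mult using exp_ux_le[OF x] by (intro mult_mono) auto
      then show "\<bar>(1 - x) * exp (u * x)\<bar> \<le> 2 * exp \<bar>u\<bar>" .
    qed simp
    fix x
    show "0 \<le> w x * ((1 - x) * exp (u * x))"
      using wnn[of x] wsupp[of x] by (cases "x \<le> 1") auto
    assume "0 < x" "x < 1"
    then show "0 < w x * ((1 - x) * exp (u * x))" using w_pos[of x] by simp
  qed simp
  finally show ?thesis by simp
qed

end

context wdens begin

lemma int_cont:
  assumes g: "continuous_on UNIV g" and S[measurable]: "S \<in> sets borel"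
  shows "integrable lborel (\<lambda>x. w x * (g x * indicator S x))"
proof -
  have gm[measurable]: "g \<in> borel_measurable borel" using g by (rule borel_measurable_continuous_onI)
  have "compact (g ` {-1..1})" using g by (intro compact_continuous_image) (auto intro: continuous_on_subset)
  then obtain B where B: "\<And>y. y \<in> g ` {-1..1} \<Longrightarrow> norm y \<le> B"
    using compact_imp_bounded bounded_iff by metis
  show ?thesis
  proof (rule int_bounded)
    fix x :: real assume "x \<in> {-1..1}"
    then have "\<bar>g x\<bar> \<le> B" using B by force
    then show "\<bar>g x * indicator S x\<bar> \<le> B" by (auto simp: indicator_def)
  qed simp
qed

lemma int_cont':
  assumes g: "continuous_on UNIV g"
  shows "integrable lborel (\<lambda>x. w x * g x)"
  using int_cont[OF g, of UNIV] by simp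

lemma lin4:
  "(\<integral>x. w x * (c3 * x^3 + c2 * x^2 + c1 * x + c0) * exp (u * x) \<partial>lborel)
    = c3 * Gk w 3 u + c2 * Gk w 2 u + c1 * Gk w 1 u + c0 * Gk w 0 u"
proof -
  have iA: "integrable lborel (\<lambda>x. w x * x^3 * exp (u * x))" by (rule int_Gk)
  have iB: "integrable lborel (\<lambda>x. w x * x^2 * exp (u * x))" by (rule int_Gk)
  have iC: "integrable lborel (\<lambda>x. w x * x^1 * exp (u * x))" by (rule int_Gk)
  have iD: "integrable lborel (\<lambda>x. w x * x^0 * exp (u * x))" by (rule int_Gk)
  have "(\<integral>x. w x * (c3 * x^3 + c2 * x^2 + c1 * x + c0) * exp (u * x) \<partial>lborel)
     = (\<integral>x. c3 * (w x * x^3 * exp (u * x)) + c2 * (w x * x^2 * exp (u * x))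
           + c1 * (w x * x^1 * exp (u * x)) + c0 * (w x * x^0 * exp (u * x)) \<partial>lborel)"
    by (rule Bochner_Integration.integral_cong) (auto simp: algebra_simps)
  also have "\<dots> = c3 * (\<integral>x. w x * x^3 * exp (u * x) \<partial>lborel) + c2 * (\<integral>x. w x * x^2 * exp (u * x) \<partial>lborel)
        + c1 * (\<integral>x. w x * x^1 * exp (u * x) \<partial>lborel) + c0 * (\<integral>x. w x * x^0 * exp (u * x) \<partial>lborel)"
    using iA iB iC iD
    by (subst Bochner_Integration.integral_add; (subst Bochner_Integration.integral_add)?;
        (subst Bochner_Integration.integral_add)?; simp del: power_Suc)
  finally show ?thesis by (simp add: Gk_def)
qed

end

context wsym begin

lemma third_neg:
  assumes u: "0 < u"
  shows "Gk w 3 u * (Gk w 0 u)^2 - 3 * Gk w 2 u * Gk w 1 u * Gk w 0 u + 2 * (Gk w 1 u)^3 < 0"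
proof -
  define G0 G1 G2 G3 where "G0 = Gk w 0 u" and "G1 = Gk w 1 u" and "G2 = Gk w 2 u" and "G3 = Gk w 3 u"
  define \<mu> where "\<mu> = G1 / G0"
  have G0p: "0 < G0" unfolding G0_def by (rule G0_pos)
  have mu0: "0 \<le> \<mu>" unfolding \<mu>_def G1_def G0_def using G1_nonneg[of u] G0_pos[of u] u by simp
  have mu1: "\<mu> < 1" unfolding \<mu>_def G1_def G0_def using G1_lt_G0[of u] G0_pos[of u] by simp
  define q where "q x = w x * exp (u * x)" for x
  define \<psi> where "\<psi> x = (x - \<mu>)^3 - (1 - \<mu>)^2 * (x - \<mu>)" for x
  define F where "F x = q x * \<psi> x" for x
  have qm[measurable]: "q \<in> borel_measurable borel" unfolding q_def by measurable
  have Fm[measurable]: "F \<in> borel_measurable borel" unfolding F_def \<psi>_def by measurable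
  have psi_cont: "continuous_on UNIV (\<lambda>x. exp (u * x) * \<psi> x)" unfolding \<psi>_def
    by (intro continuous_intros)
  have intF: "integrable lborel (\<lambda>x. F x * indicator S x)" if [measurable]: "S \<in> sets borel" for S
    using int_cont[OF psi_cont that] by (simp add: F_def q_def mult_ac)
  have intF_val: "(\<integral>x. F x \<partial>lborel) = G3 - 3 * \<mu> * G2 + (3 * \<mu>^2 - (1 - \<mu>)^2) * G1 + ((1 - \<mu>)^2 * \<mu> - \<mu>^3) * G0"
  proof -
    have "(\<integral>x. F x \<partial>lborel) = (\<integral>x. w x * (1 * x^3 + (- 3 * \<mu>) * x^2 + (3 * \<mu>^2 - (1 - \<mu>)^2) * x
          + ((1 - \<mu>)^2 * \<mu> - \<mu>^3)) * exp (u * x) \<partial>lborel)"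
      by (rule Bochner_Integration.integral_cong)
         (auto simp: F_def q_def \<psi>_def algebra_simps power2_eq_square power3_eq_cube)
    also have "\<dots> = G3 - 3 * \<mu> * G2 + (3 * \<mu>^2 - (1 - \<mu>)^2) * G1 + ((1 - \<mu>)^2 * \<mu> - \<mu>^3) * G0"
      unfolding lin4 G0_def G1_def G2_def G3_def by simp
    finally show ?thesis .
  qed
  have key: "G3 * G0^2 - 3 * G2 * G1 * G0 + 2 * G1^3 = G0^2 * (\<integral>x. F x \<partial>lborel)"
    unfolding intF_val \<mu>_def using G0p by (simp add: field_simps power2_eq_square power3_eq_cube)
  have split: "(\<integral>x. F x \<partial>lborel) = (\<integral>x. F x * indicator {..<\<mu>} x \<partial>lborel) + (\<integral>x. F x * indicator {\<mu>..} x \<partial>lborel)"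
  proof -
    have "(\<integral>x. F x \<partial>lborel) = (\<integral>x. F x * indicator {..<\<mu>} x + F x * indicator {\<mu>..} x \<partial>lborel)"
      by (rule Bochner_Integration.integral_cong) (auto split: split_indicator)
    also have "\<dots> = (\<integral>x. F x * indicator {..<\<mu>} x \<partial>lborel) + (\<integral>x. F x * indicator {\<mu>..} x \<partial>lborel)"
      using intF[of "{..<\<mu>}"] intF[of "{\<mu>..}"] by (intro Bochner_Integration.integral_add) auto
    finally show ?thesis .
  qed
  have refl: "(\<integral>x. F x * indicator {..<\<mu>} x \<partial>lborel) = (\<integral>x. F (2*\<mu> - x) * indicator {\<mu><..} x \<partial>lborel)"
  proof -
    have "(\<integral>x. F x * indicator {..<\<mu>} x \<partial>lborel) = (\<integral>x. F (2*\<mu> + -1 * x) * indicator {..<\<mu>} (2*\<mu> + -1 * x) \<partial>lborel)"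
      using lborel_integral_real_affine[of "-1" "\<lambda>x. F x * indicator {..<\<mu>} x" "2*\<mu>"] by simp
    also have "\<dots> = (\<integral>x. F (2*\<mu> - x) * indicator {\<mu><..} x \<partial>lborel)"
      by (rule Bochner_Integration.integral_cong) (auto split: split_indicator)
    finally show ?thesis .
  qed
  have intR: "integrable lborel (\<lambda>x. F (2*\<mu> - x) * indicator {\<mu><..} x)"
  proof -
    have "integrable lborel (\<lambda>x. F (2*\<mu> + -1 * x) * indicator {..<\<mu>} (2*\<mu> + -1 * x))"
      using lborel_integrable_real_affine_iff[of "-1" "\<lambda>x. F x * indicator {..<\<mu>} x" "2*\<mu>"] intF[of "{..<\<mu>}"] by simp
    then show ?thesis
      by (rule Bochner_Integration.integrable_cong[THEN iffD1, rotated 2]) (auto split: split_indicator)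
  qed
  define H where "H x = F (2*\<mu> - x) * indicator {\<mu><..} x + F x * indicator {\<mu>..} x" for x
  have intH: "integrable lborel H" unfolding H_def using intR intF[of "{\<mu>..}"] by simp
  have F_H: "(\<integral>x. F x \<partial>lborel) = (\<integral>x. H x \<partial>lborel)"
    unfolding split refl H_def using intR intF[of "{\<mu>..}"] by (simp add: Bochner_Integration.integral_add)
  have psi_fact: "\<psi> x = (x - \<mu>) * (x - 1) * (x + 1 - 2 * \<mu>)" for x
    unfolding \<psi>_def by (simp add: algebra_simps power2_eq_square power3_eq_cube)
  have psi_refl: "\<psi> (2*\<mu> - x) = - \<psi> x" for x
    unfolding psi_fact by (simp add: algebra_simps)
  have H_gt: "H x = \<psi> x * (q x - q (2*\<mu> - x))" if "\<mu> < x" for x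
  proof -
    have "F (2*\<mu> - x) = - \<psi> x * q (2*\<mu> - x)" by (simp add: F_def psi_refl)
    then show ?thesis using that by (simp add: H_def F_def algebra_simps)
  qed
  have Hnp: "0 \<le> - H x" for x
  proof (cases "\<mu> < x")
    case False
    then show ?thesis
      by (cases "x = \<mu>") (simp_all add: H_def F_def \<psi>_def)
  next
    case True
    note x = True
    show ?thesis
    proof (cases "x < 1")
      case True
      have "(x - \<mu>) * (x - 1) < 0" using x True by (intro mult_pos_neg) auto
      then have p: "\<psi> x < 0" unfolding psi_fact by (rule mult_neg_pos) (use x mu1 in linarith)
      have "q (2*\<mu> - x) \<le> q x"
      proof -
        have ax: "\<bar>x\<bar> = x" using x mu0 by simp
        have "\<bar>2*\<mu> - x\<bar> \<le> x" unfolding abs_le_iff using x mu0 by linarith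
        then have "w (2*\<mu> - x) \<le> w x" using x True mu0 ax by (intro w_le) auto
        moreover have "exp (u * (2*\<mu> - x)) \<le> exp (u * x)" using x u by simp
        ultimately show ?thesis unfolding q_def using wnn by (intro mult_mono) auto
      qed
      then have "\<psi> x * (q x - q (2*\<mu> - x)) \<le> 0" using p by (intro mult_nonpos_nonneg) auto
      then show ?thesis using H_gt[OF x] by linarith
    next
      case False
      then have x1: "1 \<le> x" by simp
      have p: "0 \<le> \<psi> x" unfolding psi_fact using x x1 mu1 by (intro mult_nonneg_nonneg) auto
      show ?thesis
      proof (cases "x = 1")
        case True then have "\<psi> x = 0" unfolding psi_fact by simp
        then have "H x = 0" using H_gt[OF x] by simp
        then show ?thesis by simp
      next
        case False then have "x \<notin> {-1..1}" using x1 by auto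
        then have "q x \<le> q (2*\<mu> - x)" unfolding q_def using wsupp[of x] wnn[of "2*\<mu> - x"] by simp
        then have "\<psi> x * (q x - q (2*\<mu> - x)) \<le> 0" using p by (intro mult_nonneg_nonpos) auto
        then show ?thesis using H_gt[OF x] by linarith
      qed
    qed
  qed
  have Hneg: "0 < - H x" if "\<mu> < x" "x < 1" for x
  proof -
    have "(x - \<mu>) * (x - 1) < 0" using that by (intro mult_pos_neg) auto
    then have p: "\<psi> x < 0" unfolding psi_fact by (rule mult_neg_pos) (use that mu1 in linarith)
    have "q (2*\<mu> - x) < q x"
    proof -
      have ax: "\<bar>x\<bar> = x" using that mu0 by simp
      have "\<bar>2*\<mu> - x\<bar> \<le> x" unfolding abs_le_iff using that mu0 by linarith
      then have w1: "w (2*\<mu> - x) \<le> w x" using that ax by (intro w_le) auto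
      have e1: "exp (u * (2*\<mu> - x)) < exp (u * x)" using that u by simp
      have w2: "0 < w x" using that mu0 ax by (intro w_pos) auto
      have "w (2*\<mu> - x) * exp (u * (2*\<mu> - x)) \<le> w x * exp (u * (2*\<mu> - x))"
        using w1 by (rule mult_right_mono) simp
      also have "\<dots> < w x * exp (u * x)" using e1 w2 by (rule mult_strict_left_mono)
      finally show ?thesis unfolding q_def .
    qed
    then have "\<psi> x * (q x - q (2*\<mu> - x)) < 0" using p by (intro mult_neg_pos) auto
    then show ?thesis using H_gt[OF that(1)] by linarith
  qed
  have "0 < (\<integral>x. - H x \<partial>lborel)"
    by (rule pos_integral_lborel[OF _ Hnp Hneg mu1]) (use intH in simp)
  then have "(\<integral>x. F x \<partial>lborel) < 0" unfolding F_H by simp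
  then have "G0^2 * (\<integral>x. F x \<partial>lborel) < 0" using G0p by (simp add: mult_pos_neg)
  then show ?thesis using key by (simp add: G0_def G1_def G2_def G3_def)
qed

end

lemma dec_on:
  fixes f f' :: "real \<Rightarrow> real"
  assumes d: "\<And>x. DERIV f x :> f' x" and n: "\<And>x. a < x \<Longrightarrow> x < b \<Longrightarrow> f' x < 0" and ab: "a < b"
  shows "f b < f a"
proof -
  obtain z where z: "a < z" "z < b" "f b - f a = (b - a) * f' z"
    using MVT2[OF ab, of f f'] d by blast
  have "(b - a) * f' z < 0" using z n[of z] ab by (simp add: mult_pos_neg)
  then show ?thesis using z by simp
qed

lemma inc_on:
  fixes f f' :: "real \<Rightarrow> real"
  assumes d: "\<And>x. DERIV f x :> f' x" and n: "\<And>x. a < x \<Longrightarrow> x < b \<Longrightarrow> 0 < f' x" and ab: "a < b"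
  shows "f a < f b"
proof -
  obtain z where z: "a < z" "z < b" "f b - f a = (b - a) * f' z"
    using MVT2[OF ab, of f f'] d by blast
  have "0 < (b - a) * f' z" using z n[of z] ab by simp
  then show ?thesis using z by simp
qed

lemma rolle0:
  fixes f f' :: "real \<Rightarrow> real"
  assumes d: "\<And>x. DERIV f x :> f' x" and ab: "a < b" and e: "f a = f b"
  shows "\<exists>z. a < z \<and> z < b \<and> f' z = 0"
proof -
  obtain z where z: "a < z" "z < b" "f b - f a = (b - a) * f' z"
    using MVT2[OF ab, of f f'] d by blast
  then show ?thesis using e ab by auto
qed

lemma shape:
  fixes g g1 g2 g3 :: "real \<Rightarrow> real"
  assumes d1: "\<And>x. DERIV g x :> g1 x" and d2: "\<And>x. DERIV g1 x :> g2 x" and d3: "\<And>x. DERIV g2 x :> g3 x"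
    and n3: "\<And>x. 0 < x \<Longrightarrow> g3 x < 0" and T: "0 < T" and g0: "g 0 = 0" and gT: "g T = 0" and g1T: "g1 T = 0"
  shows "\<And>v. 0 < v \<Longrightarrow> v \<noteq> T \<Longrightarrow> g v < 0"
proof -
  obtain \<xi> where xi: "0 < \<xi>" "\<xi> < T" "g1 \<xi> = 0" using rolle0[OF d1 T] g0 gT by auto
  obtain \<eta> where eta: "\<xi> < \<eta>" "\<eta> < T" "g2 \<eta> = 0" using rolle0[OF d2 xi(2)] xi(3) g1T by auto
  have g2p: "0 < g2 c" if "0 \<le> c" "c < \<eta>" for c
    using dec_on[OF d3 _ that(2)] n3 that(1) eta(3) by force
  have g2n: "g2 c < 0" if "\<eta> < c" for c
    using dec_on[OF d3 _ that] n3 eta xi(1) eta(3) by force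
  have g1a: "g1 c < 0" if "0 \<le> c" "c < \<xi>" for c
    using inc_on[OF d2 _ that(2)] g2p that(1) xi eta(1) xi(3) by force
  have g1b: "0 < g1 c" if "\<xi> < c" "c < T" for c
  proof (cases "c \<le> \<eta>")
    case True
    then show ?thesis using inc_on[OF d2 _ that(1)] g2p xi(1,3) by force
  next
    case False
    then show ?thesis using dec_on[OF d2 _ that(2)] g2n g1T by force
  qed
  have g1c: "g1 c < 0" if "T < c" for c
    using dec_on[OF d2 _ that] g2n eta(2) g1T by force
  fix v :: real assume v: "0 < v" "v \<noteq> T"
  consider "v \<le> \<xi>" | "\<xi> < v" "v < T" | "T < v" using v by linarith
  then show "g v < 0"
  proof cases
    case 1
    then show ?thesis using dec_on[OF d1 _ v(1)] g1a g0 by force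
  next
    case 2
    then show ?thesis using inc_on[OF d1 _ 2(2)] g1b gT by force
  next
    case 3
    then show ?thesis using dec_on[OF d1 _ 3] g1c gT by force
  qed
qed

context wsym begin

definition mm :: "real \<Rightarrow> real" where "mm v = ln (Gk w 0 v)"

lemma G0_zero: "Gk w 0 0 = 1"
  using wone by (simp add: Gk_def)

lemma mm_zero: "mm 0 = 0" by (simp add: mm_def G0_zero)

definition m1 where "m1 v = Gk w 1 v / Gk w 0 v"
definition m2 where "m2 v = (Gk w 2 v * Gk w 0 v - (Gk w 1 v)^2) / (Gk w 0 v)^2"
definition m3 where "m3 v = (Gk w 3 v * (Gk w 0 v)^2 - 3 * Gk w 2 v * Gk w 1 v * Gk w 0 v + 2 * (Gk w 1 v)^3) / (Gk w 0 v)^3"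

lemma D0: "DERIV (Gk w 0) v :> Gk w 1 v" using Gk_deriv[of 0 v] by simp
lemma D1: "DERIV (Gk w 1) v :> Gk w 2 v" using Gk_deriv[of 1 v] by (simp add: numeral_2_eq_2)
lemma D1': "DERIV (Gk w (Suc 0)) v :> Gk w 2 v" using D1 by simp
lemma D0': "DERIV (Gk w 0) v :> Gk w (Suc 0) v" using D0 by simp
lemma D2: "DERIV (Gk w 2) v :> Gk w 3 v" using Gk_deriv[of 2 v] by (simp add: numeral_3_eq_3 numeral_2_eq_2)

lemma mm_deriv: "DERIV mm v :> m1 v"
  unfolding mm_def[abs_def] m1_def
  using G0_pos[of v] by (auto intro!: derivative_eq_intros D0 D0' simp: field_simps)

lemma m1_deriv: "DERIV m1 v :> m2 v"
  unfolding m1_def[abs_def] m2_def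
  using G0_pos[of v] by (auto intro!: derivative_eq_intros D0 D1 D0' D1' simp: field_simps power2_eq_square)

lemma m2_deriv: "DERIV m2 v :> m3 v"
  unfolding m2_def[abs_def] m3_def
  using G0_pos[of v] by (auto intro!: derivative_eq_intros D0 D1 D2 D0' D1' simp: field_simps power2_eq_square power3_eq_cube)

lemma m3_neg: "0 < v \<Longrightarrow> m3 v < 0"
  unfolding m3_def using third_neg[of v] G0_pos[of v] by (simp add: divide_neg_pos)

lemma K_ineq:
  fixes u1 u2 u3 T :: real
  assumes T: "0 < T" and nn: "0 \<le> u1" "0 \<le> u2" "0 \<le> u3"
    and s1: "u1 + u2 + u3 = 2 * T" and s2: "u1^2 + u2^2 + u3^2 = 2 * T^2"
  shows "mm u1 + mm u2 + mm u3 \<le> 2 * mm T"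
    and "0 < u1 \<Longrightarrow> 0 < u2 \<Longrightarrow> 0 < u3 \<Longrightarrow> mm u1 + mm u2 + mm u3 < 2 * mm T"
proof -
  define \<alpha> where "\<alpha> = (T * m1 T - mm T) / T^2"
  define lam where "lam = (2 * mm T - T * m1 T) / T"
  define g where "g v = mm v - lam * v - \<alpha> * v^2" for v
  have dg: "DERIV g x :> m1 x - lam - 2 * \<alpha> * x" for x
    unfolding g_def[abs_def] by (auto intro!: derivative_eq_intros mm_deriv)
  have dg1: "DERIV (\<lambda>x. m1 x - lam - 2 * \<alpha> * x) x :> m2 x - 2 * \<alpha>" for x
    by (auto intro!: derivative_eq_intros m1_deriv)
  have dg2: "DERIV (\<lambda>x. m2 x - 2 * \<alpha>) x :> m3 x" for x
    by (auto intro!: derivative_eq_intros m2_deriv)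
  have g0: "g 0 = 0" by (simp add: g_def mm_zero)
  have gT: "g T = 0" using T by (simp add: g_def \<alpha>_def lam_def field_simps power2_eq_square)
  have g1T: "m1 T - lam - 2 * \<alpha> * T = 0" using T by (simp add: \<alpha>_def lam_def field_simps power2_eq_square)
  have neg: "g v < 0" if "0 < v" "v \<noteq> T" for v
    using shape[OF dg dg1 dg2 m3_neg T g0 gT g1T] that by blast
  have le: "g v \<le> 0" if "0 \<le> v" for v
    using neg[of v] that g0 gT by (cases "v = 0"; cases "v = T") auto
  have sum: "mm u1 + mm u2 + mm u3 - 2 * mm T = g u1 + g u2 + g u3"
  proof -
    have "g u1 + g u2 + g u3 = mm u1 + mm u2 + mm u3 - lam * (u1 + u2 + u3) - \<alpha> * (u1^2 + u2^2 + u3^2)"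
      by (simp add: g_def algebra_simps)
    also have "\<dots> = mm u1 + mm u2 + mm u3 - 2 * (lam * T + \<alpha> * T^2)" using s1 s2 by (simp add: algebra_simps)
    also have "lam * T + \<alpha> * T^2 = mm T" using gT by (simp add: g_def)
    finally show ?thesis by simp
  qed
  show "mm u1 + mm u2 + mm u3 \<le> 2 * mm T" using sum le[OF nn(1)] le[OF nn(2)] le[OF nn(3)] by linarith
  assume p: "0 < u1" "0 < u2" "0 < u3"
  have "u1 \<noteq> T \<or> u2 \<noteq> T \<or> u3 \<noteq> T" using s1 T by auto
  then have "g u1 < 0 \<or> g u2 < 0 \<or> g u3 < 0" using neg p by blast
  then show "mm u1 + mm u2 + mm u3 < 2 * mm T" using sum le[OF nn(1)] le[OF nn(2)] le[OF nn(3)] by linarith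
qed

end

lemma pw_ennreal:
  fixes g C :: real
  assumes "g \<le> C"
  shows "ennreal g + ennreal (C - g) + ennreal (- C) = ennreal C + ennreal (- g)"
proof (cases "0 \<le> g")
  case True
  then have "ennreal g + ennreal (C - g) = ennreal (g + (C - g))"
    using assms by (intro ennreal_plus[symmetric]) auto
  then show ?thesis using True assms by (simp add: ennreal_neg)
next
  case False
  note g = False
  show ?thesis
  proof (cases "0 \<le> C")
    case True
    have "ennreal (C - g) = ennreal (C + (- g))" by simp
    also have "\<dots> = ennreal C + ennreal (- g)" using True g by (intro ennreal_plus) auto
    finally show ?thesis using True g by (simp add: ennreal_neg)
  next
    case False
    have "ennreal (- g) = ennreal ((C - g) + (- C))" by simp
    also have "\<dots> = ennreal (C - g) + ennreal (- C)" using False assms by (intro ennreal_plus) auto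
    finally show ?thesis using False g by (simp add: ennreal_neg)
  qed
qed

lemma ext_exp_bounded:
  assumes P: "prob_space M" and gm[measurable]: "g \<in> borel_measurable M"
    and le: "AE \<omega> in M. g \<omega> \<le> C"
  shows "ext_expectation M g = ereal C - enn2ereal (\<integral>\<^sup>+\<omega>. ennreal (C - g \<omega>) \<partial>M)"
proof -
  interpret prob_space M by (rule P)
  define Pp where "Pp = (\<integral>\<^sup>+\<omega>. ennreal (g \<omega>) \<partial>M)"
  define Q where "Q = (\<integral>\<^sup>+\<omega>. ennreal (- g \<omega>) \<partial>M)"
  define R where "R = (\<integral>\<^sup>+\<omega>. ennreal (C - g \<omega>) \<partial>M)"
  have eq: "Pp + R + ennreal (- C) = ennreal C + Q"
  proof -
    have "(\<integral>\<^sup>+\<omega>. ennreal (g \<omega>) + ennreal (C - g \<omega>) + ennreal (- C) \<partial>M)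
       = (\<integral>\<^sup>+\<omega>. ennreal (g \<omega>) + ennreal (C - g \<omega>) \<partial>M) + (\<integral>\<^sup>+\<omega>. ennreal (- C) \<partial>M)"
      by (rule nn_integral_add) auto
    also have "(\<integral>\<^sup>+\<omega>. ennreal (g \<omega>) + ennreal (C - g \<omega>) \<partial>M) = Pp + R"
      unfolding Pp_def R_def by (rule nn_integral_add) auto
    also have "(\<integral>\<^sup>+\<omega>. ennreal (- C) \<partial>M) = ennreal (- C)" by (simp add: emeasure_space_1)
    finally have "Pp + R + ennreal (- C) = (\<integral>\<^sup>+\<omega>. ennreal (g \<omega>) + ennreal (C - g \<omega>) + ennreal (- C) \<partial>M)" by simp
    also have "\<dots> = (\<integral>\<^sup>+\<omega>. ennreal C + ennreal (- g \<omega>) \<partial>M)"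
      by (rule nn_integral_cong_AE) (use le in \<open>auto elim!: eventually_mono intro: pw_ennreal\<close>)
    also have "\<dots> = (\<integral>\<^sup>+\<omega>. ennreal C \<partial>M) + Q" unfolding Q_def by (rule nn_integral_add) auto
    also have "(\<integral>\<^sup>+\<omega>. ennreal C \<partial>M) = ennreal C" by (simp add: emeasure_space_1)
    finally show ?thesis .
  qed
  have Pfin: "Pp \<le> ennreal C"
  proof -
    have "Pp \<le> (\<integral>\<^sup>+\<omega>. ennreal C \<partial>M)" unfolding Pp_def
      by (rule nn_integral_mono_AE) (use le in \<open>auto elim!: eventually_mono intro: ennreal_leI\<close>)
    then show ?thesis by (simp add: emeasure_space_1)
  qed
  then have Pnt: "Pp \<noteq> \<infinity>" by (auto simp: top_unique)
  show ?thesis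
  proof (cases "R = \<infinity>")
    case True
    then have "\<top> = ennreal C + Q" using eq by (simp add: top_unique add_top)
    then have "ennreal C + Q = \<top>" by simp
    then have "Q = \<infinity>" by (simp add: ennreal_add_eq_top)
    then show ?thesis using True Pnt unfolding ext_expectation_def Pp_def[symmetric] Q_def[symmetric] R_def[symmetric]
      by (cases Pp) auto
  next
    case False
    then have Qnt: "Q \<noteq> \<infinity>" using eq Pnt by (auto simp: ennreal_add_eq_top)
    obtain p where p: "Pp = ennreal p" "0 \<le> p" using Pnt by (cases Pp) auto
    obtain q where q: "Q = ennreal q" "0 \<le> q" using Qnt by (cases Q) auto
    obtain r where r: "R = ennreal r" "0 \<le> r" using False by (cases R) auto
    have pq: "p + r = C + q"
    proof (cases "0 \<le> C")
      case True
      have "ennreal (p + r) = ennreal (C + q)" using eq p q r True by (simp add: ennreal_neg)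
      then show ?thesis using p q r True by (subst (asm) ennreal_inj) auto
    next
      case False
      have "ennreal (p + r + (- C)) = ennreal (p + r) + ennreal (- C)" by (rule ennreal_plus) (use p r False in auto)
      also have "ennreal (p + r) = ennreal p + ennreal r" by (rule ennreal_plus) (use p r in auto)
      finally have "ennreal (p + r + (- C)) = ennreal q" using eq p q r False by (simp add: ennreal_neg)
      then show ?thesis using p q r False by (subst (asm) ennreal_inj) auto
    qed
    then have "p - q = C - r" using pq by simp
    then show ?thesis unfolding ext_expectation_def Pp_def[symmetric] Q_def[symmetric] R_def[symmetric]
      using p q r by simp
  qed
qed



lemma exp_int_inner:
  assumes s: "0 < s"
  shows "(\<integral>\<^sup>+t. ennreal (exp (- t * s)) * indicator {0<..} t \<partial>lborel) = ennreal (1 / s)"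
proof -
  have "(\<integral>\<^sup>+t. ennreal (exp (- t * s)) * indicator {0<..} t \<partial>lborel)
      = (\<integral>\<^sup>+t. ennreal (exp (- t * s)) * indicator {0..} t \<partial>lborel)"
    by (rule nn_integral_cong_AE) (use AE_lborel_singleton[of 0] in \<open>auto elim!: eventually_mono split: split_indicator\<close>)
  also have "\<dots> = ennreal (0 - (- exp (- 0 * s) / s))"
  proof (rule nn_integral_FTC_atLeast)
    show "(\<lambda>t. exp (- t * s)) \<in> borel_measurable borel" by measurable
    fix x :: real
    show "DERIV (\<lambda>t. - exp (- t * s) / s) x :> exp (- x * s)"
      using s by (auto intro!: derivative_eq_intros)
    show "0 \<le> exp (- x * s)" by simp
  next
    have "((\<lambda>t. exp (- t * s)) \<longlongrightarrow> 0) at_top"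
    proof -
      have "filterlim (\<lambda>t. s * t) at_top at_top" using s
        by (intro filterlim_tendsto_pos_mult_at_top[OF tendsto_const s filterlim_ident])
      then have "filterlim (\<lambda>t. t * s) at_top at_top" by (simp add: mult.commute)
      then have "filterlim (\<lambda>t. - (t * s)) at_bot at_top" by (simp add: filterlim_uminus_at_top)
      then show ?thesis by (simp add: filterlim_compose[OF exp_at_bot])
    qed
    then have "((\<lambda>t. - exp (- t * s) / s) \<longlongrightarrow> - 0 / s) at_top"
      using s by (intro tendsto_divide tendsto_minus) auto
    then show "((\<lambda>t. - exp (- t * s) / s) \<longlongrightarrow> 0) at_top" by simp
  qed
  finally show ?thesis by simp
qed

lemma frullani:
  assumes z: "0 < z" "z \<le> A"
  shows "(\<integral>\<^sup>+t. ennreal ((exp (- t * z) - exp (- t * A)) / t) * indicator {0<..} t \<partial>lborel) = ennreal (ln A - ln z)"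
proof -
  have pf: "pair_sigma_finite lborel lborel" by (simp add: pair_sigma_finite_def lborel.sigma_finite_measure_axioms)
  have inner: "ennreal ((exp (- t * z) - exp (- t * A)) / t) = (\<integral>\<^sup>+s. ennreal (exp (- t * s)) * indicator {z..A} s \<partial>lborel)"
    if t: "0 < t" for t
  proof -
    have "(\<integral>\<^sup>+s. ennreal (exp (- t * s)) * indicator {z..A} s \<partial>lborel) = ennreal ((- exp (- t * A) / t) - (- exp (- t * z) / t))"
    proof (rule nn_integral_FTC_Icc)
      show "(\<lambda>s. exp (- t * s)) \<in> borel_measurable borel" by measurable
      fix x :: real
      show "DERIV (\<lambda>s. - exp (- t * s) / t) x :> exp (- t * x)"
        using t by (auto intro!: derivative_eq_intros)
      show "0 \<le> exp (- t * x)" by simp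
    qed (use z in auto)
    then show ?thesis by (simp add: diff_divide_distrib)
  qed
  have "(\<integral>\<^sup>+t. ennreal ((exp (- t * z) - exp (- t * A)) / t) * indicator {0<..} t \<partial>lborel)
      = (\<integral>\<^sup>+t. (\<integral>\<^sup>+s. ennreal (exp (- t * s)) * indicator {z..A} s * indicator {0<..} t \<partial>lborel) \<partial>lborel)"
  proof (rule nn_integral_cong)
    fix t :: real
    show "ennreal ((exp (- t * z) - exp (- t * A)) / t) * indicator {0<..} t
      = (\<integral>\<^sup>+s. ennreal (exp (- t * s)) * indicator {z..A} s * indicator {0<..} t \<partial>lborel)"
    proof (cases "0 < t")
      case True
      then show ?thesis using inner[OF True] by (simp add: indicator_def)
    qed (simp add: indicator_def)
  qed
  also have "\<dots> = (\<integral>\<^sup>+s. (\<integral>\<^sup>+t. ennreal (exp (- t * s)) * indicator {z..A} s * indicator {0<..} t \<partial>lborel) \<partial>lborel)"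
    by (rule pair_sigma_finite.Fubini'[OF pf, symmetric]) measurable
  also have "\<dots> = (\<integral>\<^sup>+s. ennreal (1 / s) * indicator {z..A} s \<partial>lborel)"
  proof (rule nn_integral_cong)
    fix s :: real
    show "(\<integral>\<^sup>+t. ennreal (exp (- t * s)) * indicator {z..A} s * indicator {0<..} t \<partial>lborel) = ennreal (1 / s) * indicator {z..A} s"
    proof (cases "s \<in> {z..A}")
      case True
      then have "0 < s" using z by auto
      then show ?thesis using True exp_int_inner[of s] by simp
    qed simp
  qed
  also have "\<dots> = ennreal (ln A - ln z)"
  proof (rule nn_integral_FTC_Icc)
    show "(\<lambda>s::real. 1 / s) \<in> borel_measurable borel" by measurable
    fix x :: real assume "x \<in> {z..A}"
    then have "0 < x" using z by auto
    then show "DERIV ln x :> 1 / x" by (auto intro!: derivative_eq_intros)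
    show "0 \<le> 1 / x" using \<open>0 < x\<close> by simp
  qed (use z in auto)
  finally show ?thesis .
qed


locale ctx =
  fixes M :: "'a measure" and X :: "nat \<Rightarrow> 'a \<Rightarrow> real" and f :: "real \<Rightarrow> real"
  assumes P: "prob_space M"
    and ind: "prob_space.indep_vars M (\<lambda>_. borel) X {0, 1, 2}"
    and dist: "\<And>i. i \<in> {0, 1, 2} \<Longrightarrow> distributed M lborel (X i) (\<lambda>x. ennreal (f x))"
    and rng: "\<And>i \<omega>. i \<in> {0, 1, 2} \<Longrightarrow> \<omega> \<in> space M \<Longrightarrow> X i \<omega> \<in> {-1..1}"
    and fnn: "\<And>x. x \<in> {-1..1} \<Longrightarrow> f x \<ge> 0"
    and fsym: "\<And>x. x \<in> {-1..1} \<Longrightarrow> f x = f (- x)"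
    and fmono: "strict_mono_on {0..1} f"
begin

interpretation prob_space M by (rule P)

definition fr :: "real \<Rightarrow> real" where "fr x = (if x \<in> {-1..1} then f x else 0)"

lemma Xm[measurable]: "i \<in> {0,1,2} \<Longrightarrow> X i \<in> borel_measurable M"
  using distributed_measurable[OF dist] by simp

lemma fm_enn[measurable]: "(\<lambda>x. ennreal (f x)) \<in> borel_measurable borel"
  using distributed_borel_measurable[OF dist[of 0]] by simp

lemma frm[measurable]: "fr \<in> borel_measurable borel"
proof -
  have "fr = (\<lambda>x. if x \<in> {-1..1} then enn2real (ennreal (f x)) else 0)"
    by (auto simp: fr_def fun_eq_iff fnn)
  also have "\<dots> \<in> borel_measurable borel" by measurable
  finally show ?thesis .
qed

lemma fr_nn: "0 \<le> fr x" by (simp add: fr_def fnn)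

lemma outside_null: "AE x in lborel. ennreal (f x) = ennreal (fr x)"
proof -
  have "emeasure (density lborel (\<lambda>x. ennreal (f x))) (- {-1..1}) = emeasure (distr M lborel (X 0)) (- {-1..1})"
    using distributed_distr_eq_density[OF dist[of 0]] by simp
  also have "\<dots> = emeasure M (X 0 -` (- {-1..1}) \<inter> space M)"
    by (rule emeasure_distr) auto
  also have "X 0 -` (- {-1..1}) \<inter> space M = {}" using rng[of 0] by auto
  finally have "(\<integral>\<^sup>+x. ennreal (f x) * indicator (- {-1..1}) x \<partial>lborel) = 0"
    by (subst (asm) emeasure_density) auto
  then have "AE x in lborel. ennreal (f x) * indicator (- {-1..1}) x = 0"
    by (subst (asm) nn_integral_0_iff_AE) auto
  then show ?thesis by eventually_elim (auto simp: fr_def split: split_indicator if_splits)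
qed

lemma dens_eq: "density lborel (\<lambda>x. ennreal (f x)) = density lborel (\<lambda>x. ennreal (fr x))"
  by (rule density_cong) (auto simp: outside_null)

lemma dist_fr: "i \<in> {0,1,2} \<Longrightarrow> distributed M lborel (X i) (\<lambda>x. ennreal (fr x))"
  using dist[of i] dens_eq by (simp add: distributed_def)

lemma exp_fr:
  assumes i: "i \<in> {0,1,2}" and g[measurable]: "g \<in> borel_measurable borel"
  shows "(\<integral>\<omega>. g (X i \<omega>) \<partial>M) = (\<integral>x. fr x * g x \<partial>lborel)"
  using distributed_integral[OF dist_fr[OF i], of g] fr_nn by simp

lemma nn_fr_one: "(\<integral>\<^sup>+x. ennreal (fr x) \<partial>lborel) = 1"
proof -
  have "(\<integral>\<^sup>+x. ennreal (fr x) \<partial>lborel) = emeasure (density lborel (\<lambda>x. ennreal (fr x))) UNIV"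
    by (simp add: emeasure_density)
  also have "\<dots> = emeasure (distr M lborel (X 0)) UNIV"
    using distributed_distr_eq_density[OF dist_fr[of 0]] by simp
  also have "\<dots> = emeasure M (space M)" by (subst emeasure_distr) auto
  also have "\<dots> = 1" by (rule emeasure_space_1)
  finally show ?thesis .
qed

lemma fr_int: "integrable lborel fr"
  using nn_fr_one fr_nn by (intro integrableI_nonneg) auto

lemma fr_one: "(\<integral>x. fr x \<partial>lborel) = 1"
proof -
  have "ennreal (\<integral>x. fr x \<partial>lborel) = (\<integral>\<^sup>+x. ennreal (fr x) \<partial>lborel)"
    using fr_int fr_nn by (intro nn_integral_eq_integral[symmetric]) auto
  then show ?thesis using nn_fr_one by simp
qed

lemma fr_wsym: "wsym fr"
proof
  show "integrable lborel fr" by (rule fr_int)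
  show "\<And>x. 0 \<le> fr x" by (rule fr_nn)
  show "\<And>x. x \<notin> {-1..1} \<Longrightarrow> fr x = 0" by (auto simp: fr_def)
  show "\<And>x. fr (- x) = fr x"
  proof -
    fix x :: real
    show "fr (- x) = fr x"
    proof (cases "x \<in> {-1..1}")
      case True
      then have "- x \<in> {-1..1}" by auto
      then show ?thesis using True fsym[OF True] by (simp add: fr_def)
    next
      case False
      then have "- x \<notin> {-1..1}" by auto
      then show ?thesis using False by (simp add: fr_def del: atLeastAtMost_iff)
    qed
  qed
  show "\<And>x y. 0 \<le> x \<Longrightarrow> x < y \<Longrightarrow> y \<le> 1 \<Longrightarrow> fr x < fr y"
    using fmono by (auto simp: fr_def strict_mono_on_def)
  show "(\<integral>x. fr x \<partial>lborel) = 1" by (rule fr_one)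
qed

end

context ctx begin

interpretation prob_space M by (rule P)
interpretation W: wsym fr by (rule fr_wsym)

definition Zf :: "real \<Rightarrow> real \<Rightarrow> real \<Rightarrow> 'a \<Rightarrow> real" where
  "Zf a b c \<omega> = a\<^sup>2 * (1 - X 0 \<omega>) + b\<^sup>2 * (1 - X 1 \<omega>) + c\<^sup>2 * (1 - X 2 \<omega>)"

lemma Zf_m[measurable]: "Zf a b c \<in> borel_measurable M"
  unfolding Zf_def by measurable

definition psi :: "real \<Rightarrow> real" where "psi s = (\<integral>x. fr x * exp (- s * (1 - x)) \<partial>lborel)"

lemma psi_eq: "psi s = exp (- s) * exp (W.mm s)"
proof -
  have "psi s = (\<integral>x. exp (- s) * (fr x * x^0 * exp (s * x)) \<partial>lborel)"
    unfolding psi_def by (rule Bochner_Integration.integral_cong) (auto simp: algebra_simps exp_add[symmetric])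
  also have "\<dots> = exp (- s) * Gk fr 0 s" by (simp add: Gk_def)
  also have "Gk fr 0 s = exp (W.mm s)" using W.G0_pos[of s] by (simp add: W.mm_def)
  finally show ?thesis .
qed

lemma E_exp:
  assumes t: "0 \<le> t"
  shows "(\<integral>\<omega>. exp (- t * Zf a b c \<omega>) \<partial>M) = psi (t * a\<^sup>2) * psi (t * b\<^sup>2) * psi (t * c\<^sup>2)"
proof -
  define cc where "cc i = (if i = (0::nat) then a\<^sup>2 else if i = 1 then b\<^sup>2 else c\<^sup>2)" for i
  define Y where "Y i \<omega> = exp (- (t * cc i) * (1 - X i \<omega>))" for i \<omega>
  have prodY: "exp (- t * Zf a b c \<omega>) = (\<Prod>i\<in>{0,1,2}. Y i \<omega>)" for \<omega>
    by (simp add: Y_def cc_def Zf_def exp_add[symmetric] algebra_simps)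
  have indY: "indep_vars (\<lambda>_. borel) Y {0,1,2}"
  proof -
    have meas: "(\<lambda>x. exp (- (t * cc i) * (1 - x))) \<in> borel_measurable borel" if "i \<in> {0,1,2}" for i
      by measurable
    show ?thesis unfolding Y_def using indep_vars_compose2[OF ind meas] by simp
  qed
  have intY: "integrable M (Y i)" if i: "i \<in> {0,1,2}" for i
  proof (rule integrable_const_bound[where B = 1])
    show "Y i \<in> borel_measurable M" unfolding Y_def using i by measurable
    have "cc i \<ge> 0" by (simp add: cc_def)
    show "AE \<omega> in M. norm (Y i \<omega>) \<le> 1"
    proof (rule AE_I2)
      fix \<omega> assume "\<omega> \<in> space M"
      then have "X i \<omega> \<le> 1" using rng[OF i] by auto
      then have "0 \<le> (t * cc i) * (1 - X i \<omega>)" using t \<open>cc i \<ge> 0\<close> by simp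
      then show "norm (Y i \<omega>) \<le> 1" by (simp add: Y_def)
    qed
  qed
  have "(\<integral>\<omega>. exp (- t * Zf a b c \<omega>) \<partial>M) = (\<integral>\<omega>. (\<Prod>i\<in>{0,1,2}. Y i \<omega>) \<partial>M)" by (simp only: prodY)
  also have "\<dots> = (\<Prod>i\<in>{0,1,2}. (\<integral>\<omega>. Y i \<omega> \<partial>M))"
    by (rule indep_vars_lebesgue_integral) (use indY intY in auto)
  also have "\<dots> = (\<Prod>i\<in>{0,1,2}. psi (t * cc i))"
  proof (rule prod.cong[OF refl])
    fix i :: nat assume i: "i \<in> {0,1,2}"
    have "(\<integral>\<omega>. Y i \<omega> \<partial>M) = (\<integral>x. fr x * exp (- (t * cc i) * (1 - x)) \<partial>lborel)"
      unfolding Y_def by (rule exp_fr[OF i, of "\<lambda>x. exp (- (t * cc i) * (1 - x))"]) measurable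
    then show "(\<integral>\<omega>. Y i \<omega> \<partial>M) = psi (t * cc i)" by (simp add: psi_def)
  qed
  also have "\<dots> = psi (t * a\<^sup>2) * psi (t * b\<^sup>2) * psi (t * c\<^sup>2)" by (simp add: cc_def)
  finally show ?thesis .
qed

lemma exp3:
  fixes x y z m1 m2 m3 :: real
  shows "exp (- x) * exp m1 * (exp (- y) * exp m2) * (exp (- z) * exp m3) = exp (- (x + y + z)) * exp (m1 + m2 + m3)"
proof -
  have "exp (- x) * exp m1 * (exp (- y) * exp m2) * (exp (- z) * exp m3) = exp (- x + m1 + (- y + m2) + (- z + m3))"
    by (simp only: mult_exp_exp)
  also have "\<dots> = exp (- (x + y + z) + (m1 + m2 + m3))" by (rule arg_cong[where f = exp]) linarith
  also have "\<dots> = exp (- (x + y + z)) * exp (m1 + m2 + m3)" by (simp only: mult_exp_exp)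
  finally show ?thesis .
qed

lemma fourth_powers:
  fixes a b c \<kappa> :: real
  assumes "a + b + c = 0" "a\<^sup>2 + b\<^sup>2 + c\<^sup>2 = 2 * \<kappa>\<^sup>2"
  shows "(a\<^sup>2)\<^sup>2 + (b\<^sup>2)\<^sup>2 + (c\<^sup>2)\<^sup>2 = 2 * (\<kappa>\<^sup>2)\<^sup>2"
proof -
  have c: "c = - a - b" using assms(1) by simp
  have k: "\<kappa>\<^sup>2 = a\<^sup>2 + a * b + b\<^sup>2" using assms(2) unfolding c by (simp add: algebra_simps power2_eq_square)
  show ?thesis unfolding k c by (simp add: algebra_simps power2_eq_square)
qed

lemma mgf_cmp:
  assumes k: "\<kappa> \<noteq> 0" and s1: "a + b + c = 0" and s2: "a\<^sup>2 + b\<^sup>2 + c\<^sup>2 = 2 * \<kappa>\<^sup>2" and t: "0 < t"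
  shows "(\<integral>\<omega>. exp (- t * Zf a b c \<omega>) \<partial>M) \<le> (\<integral>\<omega>. exp (- t * Zf 0 \<kappa> (- \<kappa>) \<omega>) \<partial>M)"
    and "a \<noteq> 0 \<Longrightarrow> b \<noteq> 0 \<Longrightarrow> c \<noteq> 0 \<Longrightarrow>
         (\<integral>\<omega>. exp (- t * Zf a b c \<omega>) \<partial>M) < (\<integral>\<omega>. exp (- t * Zf 0 \<kappa> (- \<kappa>) \<omega>) \<partial>M)"
proof -
  define T where "T = t * \<kappa>\<^sup>2"
  have T: "0 < T" using k t by (simp add: T_def)
  have u1: "t * a\<^sup>2 + t * b\<^sup>2 + t * c\<^sup>2 = 2 * T"
  proof -
    have "t * a\<^sup>2 + t * b\<^sup>2 + t * c\<^sup>2 = t * (a\<^sup>2 + b\<^sup>2 + c\<^sup>2)" by (simp add: algebra_simps)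
    then show ?thesis using s2 by (simp add: T_def)
  qed
  have u2: "(t * a\<^sup>2)\<^sup>2 + (t * b\<^sup>2)\<^sup>2 + (t * c\<^sup>2)\<^sup>2 = 2 * T\<^sup>2"
  proof -
    have "(t * a\<^sup>2)\<^sup>2 + (t * b\<^sup>2)\<^sup>2 + (t * c\<^sup>2)\<^sup>2 = t\<^sup>2 * ((a\<^sup>2)\<^sup>2 + (b\<^sup>2)\<^sup>2 + (c\<^sup>2)\<^sup>2)"
      by (simp add: algebra_simps power_mult_distrib)
    also have "\<dots> = t\<^sup>2 * (2 * (\<kappa>\<^sup>2)\<^sup>2)" using fourth_powers[OF s1 s2] by simp
    finally show ?thesis by (simp add: T_def power_mult_distrib)
  qed
  have nn: "0 \<le> t * a\<^sup>2" "0 \<le> t * b\<^sup>2" "0 \<le> t * c\<^sup>2" using t by auto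
  have L: "(\<integral>\<omega>. exp (- t * Zf a b c \<omega>) \<partial>M) = exp (- (2 * T)) * exp (W.mm (t * a\<^sup>2) + W.mm (t * b\<^sup>2) + W.mm (t * c\<^sup>2))"
  proof -
    have "(\<integral>\<omega>. exp (- t * Zf a b c \<omega>) \<partial>M) = psi (t * a\<^sup>2) * psi (t * b\<^sup>2) * psi (t * c\<^sup>2)"
      using t by (intro E_exp) simp
    also have "\<dots> = exp (- (t * a\<^sup>2 + t * b\<^sup>2 + t * c\<^sup>2)) * exp (W.mm (t * a\<^sup>2) + W.mm (t * b\<^sup>2) + W.mm (t * c\<^sup>2))"
      by (simp only: psi_eq exp3)
    finally show ?thesis by (simp only: u1)
  qed
  have R: "(\<integral>\<omega>. exp (- t * Zf 0 \<kappa> (- \<kappa>) \<omega>) \<partial>M) = exp (- (2 * T)) * exp (2 * W.mm T)"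
  proof -
    have "(\<integral>\<omega>. exp (- t * Zf 0 \<kappa> (- \<kappa>) \<omega>) \<partial>M) = psi (t * 0\<^sup>2) * psi (t * \<kappa>\<^sup>2) * psi (t * (- \<kappa>)\<^sup>2)"
      using t by (intro E_exp) simp
    also have "\<dots> = psi 0 * psi T * psi T" by (simp add: T_def)
    also have "\<dots> = exp (- (2 * T)) * exp (2 * W.mm T)"
      unfolding psi_eq exp3 W.mm_zero by simp
    finally show ?thesis .
  qed
  have K1: "W.mm (t * a\<^sup>2) + W.mm (t * b\<^sup>2) + W.mm (t * c\<^sup>2) \<le> 2 * W.mm T"
    by (rule W.K_ineq(1)[OF T nn u1 u2])
  show "(\<integral>\<omega>. exp (- t * Zf a b c \<omega>) \<partial>M) \<le> (\<integral>\<omega>. exp (- t * Zf 0 \<kappa> (- \<kappa>) \<omega>) \<partial>M)"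
    unfolding L R using K1 by simp
  assume "a \<noteq> 0" "b \<noteq> 0" "c \<noteq> 0"
  then have "0 < t * a\<^sup>2" "0 < t * b\<^sup>2" "0 < t * c\<^sup>2" using t by auto
  then have K2: "W.mm (t * a\<^sup>2) + W.mm (t * b\<^sup>2) + W.mm (t * c\<^sup>2) < 2 * W.mm T"
    by (rule W.K_ineq(2)[OF T nn u1 u2])
  show "(\<integral>\<omega>. exp (- t * Zf a b c \<omega>) \<partial>M) < (\<integral>\<omega>. exp (- t * Zf 0 \<kappa> (- \<kappa>) \<omega>) \<partial>M)"
    unfolding L R using K2 by simp
qed

end

context ctx begin

interpretation prob_space M by (rule P)
interpretation W: wsym fr by (rule fr_wsym)

lemma AE_X_ne1:
  assumes i: "i \<in> {0,1,2}"
  shows "AE \<omega> in M. X i \<omega> \<noteq> 1"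
proof -
  have "emeasure M (X i -` {1} \<inter> space M) = emeasure (distr M lborel (X i)) {1}"
    by (rule emeasure_distr[symmetric]) (use i in auto)
  also have "\<dots> = emeasure (density lborel (\<lambda>x. ennreal (fr x))) {1}"
    using distributed_distr_eq_density[OF dist_fr[OF i]] by simp
  also have "\<dots> = (\<integral>\<^sup>+x. ennreal (fr x) * indicator {1} x \<partial>lborel)"
    by (rule emeasure_density) auto
  also have "\<dots> = 0"
  proof (subst nn_integral_0_iff_AE)
    show "AE x in lborel. ennreal (fr x) * indicator {1} x = 0"
      using AE_lborel_singleton[of 1] by eventually_elim (auto split: split_indicator)
  qed auto
  finally have "emeasure M (X i -` {1} \<inter> space M) = 0" .
  then show ?thesis
    by (subst AE_iff_measurable[of "X i -` {1} \<inter> space M"]) (use i in auto)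
qed

lemma Z_pos:
  assumes nz: "a\<^sup>2 + b\<^sup>2 + c\<^sup>2 > 0"
  shows "AE \<omega> in M. 0 < Zf a b c \<omega>"
proof -
  have h0: "AE \<omega> in M. X 0 \<omega> \<noteq> 1" by (rule AE_X_ne1) simp
  have h1: "AE \<omega> in M. X 1 \<omega> \<noteq> 1" by (rule AE_X_ne1) simp
  have h2: "AE \<omega> in M. X 2 \<omega> \<noteq> 1" by (rule AE_X_ne1) simp
  show ?thesis using h0 h1 h2 AE_space
proof eventually_elim
  case (elim \<omega>)
  have r: "X i \<omega> \<in> {-1..1}" if "i \<in> {0,1,2}" for i using rng[OF that elim(4)] .
  have p0: "0 < 1 - X 0 \<omega>" using r[of 0] elim(1) by auto
  have p1: "0 < 1 - X 1 \<omega>" using r[of 1] elim(2) by auto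
  have p2: "0 < 1 - X 2 \<omega>" using r[of 2] elim(3) by auto
  have t0: "0 \<le> a\<^sup>2 * (1 - X 0 \<omega>)" "0 \<le> b\<^sup>2 * (1 - X 1 \<omega>)" "0 \<le> c\<^sup>2 * (1 - X 2 \<omega>)"
    using p0 p1 p2 by auto
  consider "a \<noteq> 0" | "b \<noteq> 0" | "c \<noteq> 0" using nz by fastforce
  then show ?case
  proof cases
    case 1 then have "0 < a\<^sup>2 * (1 - X 0 \<omega>)" using p0 by simp
    then show ?thesis using t0 by (simp add: Zf_def)
  next
    case 2 then have "0 < b\<^sup>2 * (1 - X 1 \<omega>)" using p1 by simp
    then show ?thesis using t0 by (simp add: Zf_def)
  next
    case 3 then have "0 < c\<^sup>2 * (1 - X 2 \<omega>)" using p2 by simp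
    then show ?thesis using t0 by (simp add: Zf_def)
  qed
qed
qed

lemma Z_le:
  assumes \<omega>: "\<omega> \<in> space M"
  shows "Zf a b c \<omega> \<le> 2 * (a\<^sup>2 + b\<^sup>2 + c\<^sup>2)"
proof -
  have r: "X i \<omega> \<in> {-1..1}" if "i \<in> {0,1,2}" for i using rng[OF that \<omega>] .
  have "a\<^sup>2 * (1 - X 0 \<omega>) \<le> a\<^sup>2 * 2" using r[of 0] by (intro mult_left_mono) auto
  moreover have "b\<^sup>2 * (1 - X 1 \<omega>) \<le> b\<^sup>2 * 2" using r[of 1] by (intro mult_left_mono) auto
  moreover have "c\<^sup>2 * (1 - X 2 \<omega>) \<le> c\<^sup>2 * 2" using r[of 2] by (intro mult_left_mono) auto
  ultimately show ?thesis by (simp add: Zf_def algebra_simps)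
qed

lemma Z_nn:
  assumes \<omega>: "\<omega> \<in> space M"
  shows "0 \<le> Zf a b c \<omega>"
proof -
  have r: "X i \<omega> \<in> {-1..1}" if "i \<in> {0,1,2}" for i using rng[OF that \<omega>] .
  then show ?thesis using r[of 0] r[of 1] r[of 2] by (simp add: Zf_def)
qed

lemma tonelli:
  assumes nz: "a\<^sup>2 + b\<^sup>2 + c\<^sup>2 > 0" and A: "2 * (a\<^sup>2 + b\<^sup>2 + c\<^sup>2) \<le> A"
  shows "(\<integral>\<^sup>+\<omega>. ennreal (ln A - ln (Zf a b c \<omega>)) \<partial>M)
    = (\<integral>\<^sup>+t. ennreal (((\<integral>\<omega>. exp (- t * Zf a b c \<omega>) \<partial>M) - exp (- t * A)) / t) * indicator {0<..} t \<partial>lborel)"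
proof -
  have pf: "pair_sigma_finite M lborel"
    by (simp add: pair_sigma_finite_def lborel.sigma_finite_measure_axioms sigma_finite_measure_axioms)
  have ZA: "Zf a b c \<omega> \<le> A" if "\<omega> \<in> space M" for \<omega> using Z_le[OF that, of a b c] A by linarith
  have "(\<integral>\<^sup>+\<omega>. ennreal (ln A - ln (Zf a b c \<omega>)) \<partial>M)
     = (\<integral>\<^sup>+\<omega>. (\<integral>\<^sup>+t. ennreal ((exp (- t * Zf a b c \<omega>) - exp (- t * A)) / t) * indicator {0<..} t \<partial>lborel) \<partial>M)"
  proof (rule nn_integral_cong_AE)
    show "AE \<omega> in M. ennreal (ln A - ln (Zf a b c \<omega>))
       = (\<integral>\<^sup>+t. ennreal ((exp (- t * Zf a b c \<omega>) - exp (- t * A)) / t) * indicator {0<..} t \<partial>lborel)"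
      using Z_pos[OF nz] AE_space
    proof eventually_elim
      case (elim \<omega>)
      show ?case by (rule frullani[symmetric]) (use elim ZA in auto)
    qed
  qed
  also have "\<dots> = (\<integral>\<^sup>+t. (\<integral>\<^sup>+\<omega>. ennreal ((exp (- t * Zf a b c \<omega>) - exp (- t * A)) / t) * indicator {0<..} t \<partial>M) \<partial>lborel)"
    by (rule pair_sigma_finite.Fubini'[OF pf, symmetric]) measurable
  also have "\<dots> = (\<integral>\<^sup>+t. ennreal (((\<integral>\<omega>. exp (- t * Zf a b c \<omega>) \<partial>M) - exp (- t * A)) / t) * indicator {0<..} t \<partial>lborel)"
  proof (rule nn_integral_cong)
    fix t :: real
    show "(\<integral>\<^sup>+\<omega>. ennreal ((exp (- t * Zf a b c \<omega>) - exp (- t * A)) / t) * indicator {0<..} t \<partial>M)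
      = ennreal (((\<integral>\<omega>. exp (- t * Zf a b c \<omega>) \<partial>M) - exp (- t * A)) / t) * indicator {0<..} t"
    proof (cases "0 < t")
      case t: True
      have int: "integrable M (\<lambda>\<omega>. exp (- t * Zf a b c \<omega>))"
      proof (rule integrable_const_bound[where B = 1])
        show "AE \<omega> in M. norm (exp (- t * Zf a b c \<omega>)) \<le> 1"
          by (rule AE_I2) (use t Z_nn in \<open>simp add: mult_nonneg_nonneg\<close>)
      qed measurable
      have int2: "integrable M (\<lambda>\<omega>. (exp (- t * Zf a b c \<omega>) - exp (- t * A)) / t)"
        using int by (intro integrable_divide Bochner_Integration.integrable_diff) auto
      have "(\<integral>\<^sup>+\<omega>. ennreal ((exp (- t * Zf a b c \<omega>) - exp (- t * A)) / t) \<partial>M)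
          = ennreal (\<integral>\<omega>. (exp (- t * Zf a b c \<omega>) - exp (- t * A)) / t \<partial>M)"
      proof (rule nn_integral_eq_integral[OF int2])
        show "AE \<omega> in M. 0 \<le> (exp (- t * Zf a b c \<omega>) - exp (- t * A)) / t"
        proof (rule AE_I2)
          fix \<omega> assume "\<omega> \<in> space M"
          then have "t * Zf a b c \<omega> \<le> t * A" using ZA t by (intro mult_left_mono) auto
          then show "0 \<le> (exp (- t * Zf a b c \<omega>) - exp (- t * A)) / t" using t by simp
        qed
      qed
      also have "(\<integral>\<omega>. (exp (- t * Zf a b c \<omega>) - exp (- t * A)) / t \<partial>M)
          = ((\<integral>\<omega>. exp (- t * Zf a b c \<omega>) \<partial>M) - exp (- t * A)) / t"
        using int by (simp add: Bochner_Integration.integral_diff prob_space)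
      finally show ?thesis using t by simp
    qed simp
  qed
  finally show ?thesis .
qed

end

context ctx begin

interpretation prob_space M by (rule P)

definition Phi :: "real \<Rightarrow> real \<Rightarrow> real \<Rightarrow> real \<Rightarrow> ennreal" where
  "Phi A a b c = (\<integral>\<^sup>+\<omega>. ennreal (ln A - ln (Zf a b c \<omega>)) \<partial>M)"

definition Ig :: "real \<Rightarrow> real \<Rightarrow> real \<Rightarrow> real \<Rightarrow> real \<Rightarrow> ennreal" where
  "Ig A a b c t = ennreal (((\<integral>\<omega>. exp (- t * Zf a b c \<omega>) \<partial>M) - exp (- t * A)) / t) * indicator {0<..} t"

lemma Ig_m[measurable]: "Ig A a b c \<in> borel_measurable borel"
  unfolding Ig_def by measurable

lemma Flog_eq:
  assumes nz: "a\<^sup>2 + b\<^sup>2 + c\<^sup>2 > 0" and A: "2 * (a\<^sup>2 + b\<^sup>2 + c\<^sup>2) \<le> A"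
  shows "Flog M X a b c = ereal (ln A) - enn2ereal (\<integral>\<^sup>+t. Ig A a b c t \<partial>lborel)"
proof -
  have "Flog M X a b c = ext_expectation M (\<lambda>\<omega>. ln (Zf a b c \<omega>))"
    by (simp add: Flog_def Zf_def)
  also have "\<dots> = ereal (ln A) - enn2ereal (\<integral>\<^sup>+\<omega>. ennreal (ln A - ln (Zf a b c \<omega>)) \<partial>M)"
  proof (rule ext_exp_bounded[OF P])
    show "(\<lambda>\<omega>. ln (Zf a b c \<omega>)) \<in> borel_measurable M" by measurable
    show "AE \<omega> in M. ln (Zf a b c \<omega>) \<le> ln A"
      using Z_pos[OF nz] AE_space
    proof eventually_elim
      case (elim \<omega>)
      have "Zf a b c \<omega> \<le> A" using Z_le[OF elim(2), of a b c] A by linarith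
      then show ?case using elim(1) by simp
    qed
  qed
  also have "(\<integral>\<^sup>+\<omega>. ennreal (ln A - ln (Zf a b c \<omega>)) \<partial>M) = (\<integral>\<^sup>+t. Ig A a b c t \<partial>lborel)"
    unfolding Ig_def by (rule tonelli[OF nz A])
  finally show ?thesis .
qed

lemma main:
  assumes k: "\<kappa> \<noteq> 0" and s1: "a + b + c = 0" and s2: "a\<^sup>2 + b\<^sup>2 + c\<^sup>2 = 2 * \<kappa>\<^sup>2"
  shows "Flog M X a b c \<ge> Flog M X 0 \<kappa> (- \<kappa>) \<and>
         (a \<noteq> 0 \<and> b \<noteq> 0 \<and> c \<noteq> 0 \<and> Flog M X 0 \<kappa> (- \<kappa>) > - \<infinity>
           \<longrightarrow> Flog M X a b c > Flog M X 0 \<kappa> (- \<kappa>))"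
proof -
  define A where "A = 4 * \<kappa>\<^sup>2"
  have nz1: "a\<^sup>2 + b\<^sup>2 + c\<^sup>2 > 0" using s2 k by simp
  have nz0: "0\<^sup>2 + \<kappa>\<^sup>2 + (- \<kappa>)\<^sup>2 > 0" using k by simp
  have A1: "2 * (a\<^sup>2 + b\<^sup>2 + c\<^sup>2) \<le> A" using s2 by (simp add: A_def)
  have A0: "2 * (0\<^sup>2 + \<kappa>\<^sup>2 + (- \<kappa>)\<^sup>2) \<le> A" by (simp add: A_def)
  have F1: "Flog M X a b c = ereal (ln A) - enn2ereal (\<integral>\<^sup>+t. Ig A a b c t \<partial>lborel)"
    by (rule Flog_eq[OF nz1 A1])
  have F0: "Flog M X 0 \<kappa> (- \<kappa>) = ereal (ln A) - enn2ereal (\<integral>\<^sup>+t. Ig A 0 \<kappa> (- \<kappa>) t \<partial>lborel)"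
    by (rule Flog_eq[OF nz0 A0])
  have pw: "Ig A a b c t \<le> Ig A 0 \<kappa> (- \<kappa>) t" for t
  proof (cases "0 < t")
    case t: True
    have "(\<integral>\<omega>. exp (- t * Zf a b c \<omega>) \<partial>M) \<le> (\<integral>\<omega>. exp (- t * Zf 0 \<kappa> (- \<kappa>) \<omega>) \<partial>M)"
      by (rule mgf_cmp(1)[OF k s1 s2 t])
    then have "((\<integral>\<omega>. exp (- t * Zf a b c \<omega>) \<partial>M) - exp (- t * A)) / t
        \<le> ((\<integral>\<omega>. exp (- t * Zf 0 \<kappa> (- \<kappa>) \<omega>) \<partial>M) - exp (- t * A)) / t"
      using t by (intro divide_right_mono) auto
    then show ?thesis using t by (simp add: Ig_def ennreal_leI)
  qed (simp add: Ig_def)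
  have le: "(\<integral>\<^sup>+t. Ig A a b c t \<partial>lborel) \<le> (\<integral>\<^sup>+t. Ig A 0 \<kappa> (- \<kappa>) t \<partial>lborel)"
    by (rule nn_integral_mono) (rule pw)
  have part1: "Flog M X a b c \<ge> Flog M X 0 \<kappa> (- \<kappa>)"
    unfolding F1 F0 by (rule ereal_minus_mono) (use le in \<open>auto simp: less_eq_ennreal.rep_eq\<close>)
  have part2: "Flog M X a b c > Flog M X 0 \<kappa> (- \<kappa>)"
    if nz: "a \<noteq> 0" "b \<noteq> 0" "c \<noteq> 0" and fin: "Flog M X 0 \<kappa> (- \<kappa>) > - \<infinity>"
  proof -
    have fin0: "(\<integral>\<^sup>+t. Ig A 0 \<kappa> (- \<kappa>) t \<partial>lborel) \<noteq> \<top>"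
    proof
      assume "(\<integral>\<^sup>+t. Ig A 0 \<kappa> (- \<kappa>) t \<partial>lborel) = \<top>"
      then have "Flog M X 0 \<kappa> (- \<kappa>) = - \<infinity>" unfolding F0 by simp
      then show False using fin by simp
    qed
    have fin1: "(\<integral>\<^sup>+t. Ig A a b c t \<partial>lborel) \<noteq> \<top>" using le fin0 by (auto simp: top_unique)
    have strict: "Ig A a b c t < Ig A 0 \<kappa> (- \<kappa>) t" if t: "0 < t" for t
    proof -
      have "(\<integral>\<omega>. exp (- t * Zf a b c \<omega>) \<partial>M) < (\<integral>\<omega>. exp (- t * Zf 0 \<kappa> (- \<kappa>) \<omega>) \<partial>M)"
        by (rule mgf_cmp(2)[OF k s1 s2 t nz])
      then have lt: "((\<integral>\<omega>. exp (- t * Zf a b c \<omega>) \<partial>M) - exp (- t * A)) / t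
          < ((\<integral>\<omega>. exp (- t * Zf 0 \<kappa> (- \<kappa>) \<omega>) \<partial>M) - exp (- t * A)) / t"
        using t by (intro divide_strict_right_mono) auto
      have "0 \<le> ((\<integral>\<omega>. exp (- t * Zf a b c \<omega>) \<partial>M) - exp (- t * A)) / t"
      proof -
        have "exp (- t * A) = (\<integral>\<omega>. exp (- t * A) \<partial>M)" by (simp add: prob_space)
        also have "\<dots> \<le> (\<integral>\<omega>. exp (- t * Zf a b c \<omega>) \<partial>M)"
        proof (rule integral_mono_AE)
          show "integrable M (\<lambda>\<omega>. exp (- t * A))" by simp
          show "integrable M (\<lambda>\<omega>. exp (- t * Zf a b c \<omega>))"
          proof (rule integrable_const_bound[where B = 1])
            show "AE \<omega> in M. norm (exp (- t * Zf a b c \<omega>)) \<le> 1"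
              by (rule AE_I2) (use t Z_nn in \<open>simp add: mult_nonneg_nonneg\<close>)
          qed measurable
          show "AE \<omega> in M. exp (- t * A) \<le> exp (- t * Zf a b c \<omega>)"
          proof (rule AE_I2)
            fix \<omega> assume "\<omega> \<in> space M"
            then have "Zf a b c \<omega> \<le> A" using Z_le[of \<omega> a b c] A1 by linarith
            then show "exp (- t * A) \<le> exp (- t * Zf a b c \<omega>)" using t by (simp add: mult_left_mono)
          qed
        qed
        finally show ?thesis using t by simp
      qed
      then show ?thesis using lt t by (simp add: Ig_def ennreal_lessI)
    qed
    have less: "(\<integral>\<^sup>+t. Ig A a b c t \<partial>lborel) < (\<integral>\<^sup>+t. Ig A 0 \<kappa> (- \<kappa>) t \<partial>lborel)"
    proof (rule nn_integral_less)
      show "(\<integral>\<^sup>+t. Ig A a b c t \<partial>lborel) \<noteq> \<infinity>" using fin1 by simp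
      show "AE t in lborel. Ig A a b c t \<le> Ig A 0 \<kappa> (- \<kappa>) t" using pw by simp
      show "\<not> (AE t in lborel. Ig A 0 \<kappa> (- \<kappa>) t \<le> Ig A a b c t)"
      proof
        assume "AE t in lborel. Ig A 0 \<kappa> (- \<kappa>) t \<le> Ig A a b c t"
        then have "AE t in lborel. t \<notin> {0<..<1::real}"
          by eventually_elim (use strict in \<open>force simp: not_le[symmetric]\<close>)
        then have "{0<..<1::real} \<in> null_sets lborel" by (subst AE_iff_null_sets) auto
        then have "emeasure lborel {0<..<1::real} = 0" by auto
        then show False by simp
      qed
    qed measurable
    obtain p where p: "(\<integral>\<^sup>+t. Ig A a b c t \<partial>lborel) = ennreal p" "0 \<le> p"
      using fin1 by (cases "(\<integral>\<^sup>+t. Ig A a b c t \<partial>lborel)") auto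
    obtain q where q: "(\<integral>\<^sup>+t. Ig A 0 \<kappa> (- \<kappa>) t \<partial>lborel) = ennreal q" "0 \<le> q"
      using fin0 by (cases "(\<integral>\<^sup>+t. Ig A 0 \<kappa> (- \<kappa>) t \<partial>lborel)") auto
    have "p < q" using less p q by (simp add: ennreal_less_iff)
    then show ?thesis unfolding F1 F0 p q using p(2) q(2) by simp
  qed
  show ?thesis using part1 part2 by blast
qed

end

theorem theorem5p1:
  fixes M :: "'a measure" and X :: "nat \<Rightarrow> 'a \<Rightarrow> real" and f :: "real \<Rightarrow> real"
    and \<kappa> a b c :: real
  assumes "prob_space M"
    and "prob_space.indep_vars M (\<lambda>_. borel) X {0, 1, 2}"
    and "\<And>i. i \<in> {0, 1, 2} \<Longrightarrow> distributed M lborel (X i) (\<lambda>x. ennreal (f x))"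
    and "\<And>i \<omega>. i \<in> {0, 1, 2} \<Longrightarrow> \<omega> \<in> space M \<Longrightarrow> X i \<omega> \<in> {-1..1}"
    and "\<And>x. x \<in> {-1..1} \<Longrightarrow> f x \<ge> 0"
    and "\<And>x. x \<in> {-1..1} \<Longrightarrow> f x = f (- x)"
    and "strict_mono_on {0..1} f"
    and "\<kappa> \<noteq> 0"
    and "a + b + c = 0"
    and "a\<^sup>2 + b\<^sup>2 + c\<^sup>2 = 2 * \<kappa>\<^sup>2"
  shows "Flog M X a b c \<ge> Flog M X 0 \<kappa> (- \<kappa>) \<and>
         (a \<noteq> 0 \<and> b \<noteq> 0 \<and> c \<noteq> 0 \<and> Flog M X 0 \<kappa> (- \<kappa>) > - \<infinity>
           \<longrightarrow> Flog M X a b c > Flog M X 0 \<kappa> (- \<kappa>))"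
proof -
  interpret ctx M X f
    by (rule ctx.intro[OF assms(1-7)])
  show ?thesis by (rule main[OF assms(8-10)])
qed


end
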